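(* Let $X$ be a real Banach space and let $g:X^*\to(-\infty,+\infty]$ be a proper convex weak$^*$-lower semicontinuous function. Let $\varepsilon>0$, $\beta\ge 0$, $x_0^*\in\operatorname{dom} g$, and $x_0\in\partial_\varepsilon g(x_0^* )\cap X$. Then there exist $x_\varepsilon^*\in\operatorname{dom} g$ and $x_\varepsilon\in X$ such that (i) $x_\varepsilon\in\partial g(x_\varepsilon^* )\cap X$; (ii) $\|x_\varepsilon^*-x_0^*\|\le\sqrt{\varepsilon}\,(1+\beta\|x_0^*\|)$; (iii) $|g(x_\varepsilon^* )-g(x_0^* )|\le\sqrt{\varepsilon}\,(\|x_0\|+\beta|\langle x_0^*,x_0\rangle|)+2\varepsilon$; (iv) $\|x_\varepsilon-x_0\|\le\sqrt{\varepsilon}$; (v) $|\langle x_\varepsilon,x^*\rangle-\langle x_0,x^*\rangle|\le\sqrt{\varepsilon}\,\|x^*\|$ for all $x^*\in X^*$; (vi) $x_0\in\partial_{2\varepsilon} g(x_\varepsilon^* )$; (vii) $|\langle x_\varepsilon-x_0,x_\varepsilon^*-x_0^*\rangle|\le\varepsilon$.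
   Context: $X^*$ is the dual of $X$, and $X$ is identified with its canonical image in $X^{**}$. $\operatorname{dom} g=\{x^*\in X^*: g(x^* )<+\infty\}$; "proper" means $g$ never takes the value $-\infty$ and $\operatorname{dom} g\neq\emptyset$. For $x^*\in\operatorname{dom} g$ and $\varepsilon\ge 0$, $\partial_\varepsilon g(x^* )=\{x^{**}\in X^{**}:\langle x^{**},y^*-x^*\rangle\le g(y^* )-g(x^* )+\varepsilon\ \text{for all } y^*\in X^*\}$, and $\partial g=\partial_0 g$; so $\partial_\varepsilon g(x^* )\cap X=\{x\in X:\langle y^*-x^*,x\rangle\le g(y^* )-g(x^* )+\varepsilon\ \forall y^*\in X^*\}$. *)

theory Defs
  imports "HOL-Analysis.Analysis"
begin

text \<open>X is a real Banach space (type 'a::banach); its dual X* is the type of bounded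
linear functionals 'a \<Rightarrow>L real with the operator norm. The pairing of x* with x is
blinfun_apply x* x.\<close>

definition weak_star_topology :: "('a::real_normed_vector \<Rightarrow>\<^sub>L real) topology" where
  "weak_star_topology =
     topology_generated_by {{f. blinfun_apply f x \<in> U} | x U. open (U :: real set)}"

definition proper_fun :: "('b \<Rightarrow> ereal) \<Rightarrow> bool" where
  "proper_fun g \<longleftrightarrow> (\<forall>x. g x \<noteq> -\<infinity>) \<and> (\<exists>x. g x < \<infinity>)"

definition convex_efun :: "('b::real_vector \<Rightarrow> ereal) \<Rightarrow> bool" where
  "convex_efun g \<longleftrightarrow> (\<forall>x y t. 0 \<le> t \<and> t \<le> 1 \<longrightarrow>
      g (t *\<^sub>R x + (1 - t) *\<^sub>R y) \<le> ereal t * g x + ereal (1 - t) * g y)"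

definition weak_star_lsc :: "(('a::real_normed_vector \<Rightarrow>\<^sub>L real) \<Rightarrow> ereal) \<Rightarrow> bool" where
  "weak_star_lsc g \<longleftrightarrow> (\<forall>c::real. closedin weak_star_topology {f. g f \<le> ereal c})"

definition edom :: "('b \<Rightarrow> ereal) \<Rightarrow> 'b set" where
  "edom g = {x. g x < \<infinity>}"

definition eps_subdiff_X ::
  "(('a::real_normed_vector \<Rightarrow>\<^sub>L real) \<Rightarrow> ereal) \<Rightarrow> real \<Rightarrow> ('a \<Rightarrow>\<^sub>L real) \<Rightarrow> 'a set" where
  "eps_subdiff_X g e xs = {x. \<forall>ys. ereal (blinfun_apply (ys - xs) x) \<le> g ys - g xs + ereal e}"

end

theory Submission
  imports Defs
begin

lemma wstar_nbhd:
  assumes "openin weak_star_topology U" "y \<in> U"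
  shows "\<exists>xs (d::real). d > 0 \<and> {y'. \<forall>x\<in>set xs. \<bar>blinfun_apply y' x - blinfun_apply y x\<bar> < d} \<subseteq> U"
proof -
  have "generate_topology_on {{f. blinfun_apply f x \<in> U} | x U. open (U :: real set)} U"
    using assms(1) unfolding weak_star_topology_def openin_topology_generated_by_iff .
  then show ?thesis using assms(2)
  proof (induction arbitrary: y)
    case Empty then show ?case by simp
  next
    case (Int a b)
    from Int.IH(1)[of y] Int.prems obtain xs1 d1 where 1: "d1 > 0" "{y'. \<forall>x\<in>set xs1. \<bar>blinfun_apply y' x - blinfun_apply y x\<bar> < d1} \<subseteq> a" by auto
    from Int.IH(2)[of y] Int.prems obtain xs2 d2 where 2: "d2 > 0" "{y'. \<forall>x\<in>set xs2. \<bar>blinfun_apply y' x - blinfun_apply y x\<bar> < d2} \<subseteq> b" by auto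
    show ?case
      apply (rule exI[of _ "xs1 @ xs2"], rule exI[of _ "min d1 d2"])
      using 1 2 by force
  next
    case (UN K)
    then obtain k where "k \<in> K" "y \<in> k" by auto
    with UN.IH[of k y] show ?case by blast
  next
    case (Basis s)
    then obtain x V where s: "s = {f. blinfun_apply f x \<in> V}" "open V" by auto
    with Basis.prems have "blinfun_apply y x \<in> V" by auto
    with s(2) obtain e where e: "e > 0" "ball (blinfun_apply y x) e \<subseteq> V" by (meson open_contains_ball)
    show ?case
      apply (rule exI[of _ "[x]"], rule exI[of _ e])
      using e by (auto simp: s dist_real_def subset_iff abs_minus_commute)
  qed
qed

lemma wstar_closed_nbhd:
  assumes "closedin weak_star_topology S" "y \<notin> S"
  shows "\<exists>xs (d::real). d > 0 \<and> (\<forall>y'. (\<forall>x\<in>set xs. \<bar>blinfun_apply y' x - blinfun_apply y x\<bar> < d) \<longrightarrow> y' \<notin> S)"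
proof -
  have top: "topspace weak_star_topology = UNIV"
    unfolding weak_star_topology_def topology_generated_by_topspace
    by (auto intro!: exI[of _ UNIV])
  have "openin weak_star_topology (- S)" using assms(1) unfolding closedin_def top
    by (simp add: Compl_eq_Diff_UNIV)
  from wstar_nbhd[OF this] assms(2) show ?thesis by blast
qed

definition lin :: "('v::real_vector \<Rightarrow> real) \<Rightarrow> bool" where
  "lin F \<longleftrightarrow> (\<forall>a b. F (a + b) = F a + F b) \<and> (\<forall>c a. F (c *\<^sub>R a) = c * F a)"

definition sublin :: "('v::real_vector \<Rightarrow> real) \<Rightarrow> bool" where
  "sublin p \<longleftrightarrow> (\<forall>a b. p (a + b) \<le> p a + p b) \<and> (\<forall>t a. t > 0 \<longrightarrow> p (t *\<^sub>R a) \<le> t * p a)"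

lemma sublin_hom:
  assumes "sublin p" "t > 0" shows "p (t *\<^sub>R a) = t * p a"
proof -
  have 1: "p (t *\<^sub>R a) \<le> t * p a" using assms unfolding sublin_def by auto
  have "p a = p (inverse t *\<^sub>R (t *\<^sub>R a))" using assms(2) by simp
  also have "\<dots> \<le> inverse t * p (t *\<^sub>R a)"
  proof -
    have "inverse t > 0" using assms(2) by simp
    then show ?thesis using assms(1) unfolding sublin_def by blast
  qed
  finally have "t * p a \<le> p (t *\<^sub>R a)" using assms(2)
    by (simp add: field_simps)
  with 1 show ?thesis by simp
qed

lemma sublin_0: assumes "sublin p" shows "p 0 = 0"
  using sublin_hom[OF assms, of 2 0] by simp

definition goodG :: "('v::real_vector \<Rightarrow> real) \<Rightarrow> 'v \<Rightarrow> ('v \<times> real) set \<Rightarrow> bool" where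
  "goodG p u G \<longleftrightarrow> (u, 1) \<in> G
     \<and> (\<forall>x a y b. (x,a) \<in> G \<longrightarrow> (y,b) \<in> G \<longrightarrow> (x + y, a + b) \<in> G)
     \<and> (\<forall>x a t. (x,a) \<in> G \<longrightarrow> (t *\<^sub>R x, t * a) \<in> G)
     \<and> (\<forall>x a b. (x,a) \<in> G \<longrightarrow> (x,b) \<in> G \<longrightarrow> a = b)
     \<and> (\<forall>x a. (x,a) \<in> G \<longrightarrow> a \<le> p x)"

lemma goodG_D:
  assumes "goodG p u G"
  shows "(u,1) \<in> G" "\<And>x a y b. (x,a) \<in> G \<Longrightarrow> (y,b) \<in> G \<Longrightarrow> (x + y, a + b) \<in> G"
    "\<And>x a t. (x,a) \<in> G \<Longrightarrow> (t *\<^sub>R x, t * a) \<in> G"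
    "\<And>x a b. (x,a) \<in> G \<Longrightarrow> (x,b) \<in> G \<Longrightarrow> a = b"
    "\<And>x a. (x,a) \<in> G \<Longrightarrow> a \<le> p x"
  using assms unfolding goodG_def by blast+

lemma goodG_extend:
  assumes p: "sublin p" and G: "goodG p u G" and w: "\<forall>b. (w, b) \<notin> G"
  shows "\<exists>G'. goodG p u G' \<and> G \<subseteq> G' \<and> G \<noteq> G'"
proof -
  have add: "\<And>x a y b. (x,a) \<in> G \<Longrightarrow> (y,b) \<in> G \<Longrightarrow> (x + y, a + b) \<in> G"
    and sc: "\<And>x a t. (x,a) \<in> G \<Longrightarrow> (t *\<^sub>R x, t * a) \<in> G"
    and fn: "\<And>x a b. (x,a) \<in> G \<Longrightarrow> (x,b) \<in> G \<Longrightarrow> a = b"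
    and dom: "\<And>x a. (x,a) \<in> G \<Longrightarrow> a \<le> p x"
    and u: "(u,1) \<in> G"
    using G unfolding goodG_def by blast+
  have padd: "\<And>a b. p (a + b) \<le> p a + p b" using p unfolding sublin_def by blast
  have z: "(0, 0) \<in> G" using sc[OF u, of 0] by simp
  define S where "S = {a - p (x - w) | x a. (x,a) \<in> G}"
  have key: "a - p (x - w) \<le> p (y + w) - b" if "(x,a) \<in> G" "(y,b) \<in> G" for x a y b
  proof -
    have "a + b \<le> p (x + y)" using dom[OF add[OF that]] .
    also have "\<dots> = p ((x - w) + (y + w))" by (simp add: algebra_simps)
    also have "\<dots> \<le> p (x - w) + p (y + w)" by (rule padd)
    finally show ?thesis by simp
  qed
  have Sne: "S \<noteq> {}" using z unfolding S_def by blast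
  have Sbdd: "bdd_above S" unfolding S_def bdd_above_def using key[OF _ z] by auto
  define c where "c = Sup S"
  have c1: "a - p (x - w) \<le> c" if "(x,a) \<in> G" for x a
    unfolding c_def by (rule cSup_upper[OF _ Sbdd]) (use that S_def in blast)
  have c2: "c \<le> p (y + w) - b" if "(y,b) \<in> G" for y b
    unfolding c_def by (rule cSup_least[OF Sne]) (use key[OF _ that] S_def in blast)
  define G' where "G' = {(x + t *\<^sub>R w, a + t * c) | x a t. (x,a) \<in> G}"
  have "goodG p u G'"
    unfolding goodG_def
  proof (intro conjI allI impI)
    have "(u, 1) = (u + 0 *\<^sub>R w, 1 + 0 * c)" by simp
    then show "(u, 1) \<in> G'" unfolding G'_def using u by blast
  next
    fix x a y b assume "(x, a) \<in> G'" "(y, b) \<in> G'"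
    then obtain x1 a1 t1 x2 a2 t2 where g: "(x1,a1) \<in> G" "(x2,a2) \<in> G"
      and e: "x = x1 + t1 *\<^sub>R w" "a = a1 + t1 * c" "y = x2 + t2 *\<^sub>R w" "b = a2 + t2 * c"
      unfolding G'_def by blast
    show "(x + y, a + b) \<in> G'"
    proof -
      have "(x + y, a + b) = ((x1 + x2) + (t1 + t2) *\<^sub>R w, (a1 + a2) + (t1 + t2) * c)"
        using e by (simp add: algebra_simps)
      then show ?thesis unfolding G'_def using add[OF g] by blast
    qed
  next
    fix x a t assume "(x, a) \<in> G'"
    then obtain x1 a1 t1 where g: "(x1,a1) \<in> G" and e: "x = x1 + t1 *\<^sub>R w" "a = a1 + t1 * c"
      unfolding G'_def by blast
    show "(t *\<^sub>R x, t * a) \<in> G'"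
    proof -
      have "(t *\<^sub>R x, t * a) = (t *\<^sub>R x1 + (t * t1) *\<^sub>R w, t * a1 + (t * t1) * c)"
        using e by (simp add: algebra_simps)
      then show ?thesis unfolding G'_def using sc[OF g] by blast
    qed
  next
    fix x a b assume "(x, a) \<in> G'" "(x, b) \<in> G'"
    then obtain x1 a1 t1 x2 a2 t2 where g: "(x1,a1) \<in> G" "(x2,a2) \<in> G"
      and e: "x = x1 + t1 *\<^sub>R w" "a = a1 + t1 * c" "x = x2 + t2 *\<^sub>R w" "b = a2 + t2 * c"
      unfolding G'_def by blast
    have "t1 = t2"
    proof (rule ccontr)
      assume ne: "t1 \<noteq> t2"
      have "(x1 + (-1) *\<^sub>R x2, a1 + (-1) * a2) \<in> G" using add[OF g(1) sc[OF g(2)]] .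
      from sc[OF this, of "inverse (t2 - t1)"]
      have "(inverse (t2 - t1) *\<^sub>R (x1 - x2), inverse (t2 - t1) * (a1 - a2)) \<in> G" by simp
      moreover have "x1 - x2 = (t2 - t1) *\<^sub>R w" using e by (simp add: algebra_simps)
      ultimately have "(w, inverse (t2 - t1) * (a1 - a2)) \<in> G" using ne by simp
      with w show False by blast
    qed
    with e have "x1 = x2" by simp
    with fn g \<open>t1 = t2\<close> e show "a = b" by blast
  next
    fix x a assume "(x, a) \<in> G'"
    then obtain x1 a1 t where g: "(x1,a1) \<in> G" and e: "x = x1 + t *\<^sub>R w" "a = a1 + t * c"
      unfolding G'_def by blast
    consider "t = 0" | "t > 0" | "t < 0" by linarith
    then show "a \<le> p x"
    proof cases
      case 1 then show ?thesis using e dom[OF g] by simp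
    next
      case 2
      have "c \<le> p (inverse t *\<^sub>R x1 + w) - inverse t * a1" using c2[OF sc[OF g]] .
      then have "t * c \<le> t * p (inverse t *\<^sub>R x1 + w) - a1" using 2
        by (simp add: field_simps)
      also have "t * p (inverse t *\<^sub>R x1 + w) = p (t *\<^sub>R (inverse t *\<^sub>R x1 + w))"
        using sublin_hom[OF p 2] by simp
      also have "t *\<^sub>R (inverse t *\<^sub>R x1 + w) = x" using 2 e by (simp add: algebra_simps)
      finally show ?thesis using e by simp
    next
      case 3
      define s where "s = - t"
      have s: "s > 0" using 3 s_def by simp
      have "inverse s * a1 - p (inverse s *\<^sub>R x1 - w) \<le> c" using c1[OF sc[OF g]] .
      then have "a1 - s * p (inverse s *\<^sub>R x1 - w) \<le> s * c" using s
        by (simp add: field_simps)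
      also have "s * p (inverse s *\<^sub>R x1 - w) = p (s *\<^sub>R (inverse s *\<^sub>R x1 - w))"
        using sublin_hom[OF p s] by simp
      also have "s *\<^sub>R (inverse s *\<^sub>R x1 - w) = x" using s e s_def by (simp add: algebra_simps)
      finally show ?thesis using e s_def by simp
    qed
  qed
  moreover have "G \<subseteq> G'"
  proof
    fix z assume "z \<in> G"
    moreover obtain x a where "z = (x, a)" by force
    moreover have "(x, a) = (x + 0 *\<^sub>R w, a + 0 * c)" by simp
    ultimately show "z \<in> G'" unfolding G'_def by blast
  qed
  moreover have "(w, c) \<in> G'"
  proof -
    have "(w, c) = (0 + 1 *\<^sub>R w, 0 + 1 * c)" by simp
    then show ?thesis unfolding G'_def using z by blast
  qed
  ultimately show ?thesis using w by blast
qed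

theorem hahn_banach:
  assumes p: "sublin p" and pu: "p u \<ge> 1" and pmu: "p (- u) \<ge> -1"
  shows "\<exists>F. lin F \<and> F u = 1 \<and> (\<forall>a. F a \<le> p a)"
proof -
  have p0: "p 0 = 0" by (rule sublin_0[OF p])
  have u0: "u \<noteq> 0" using pu p0 by auto
  define G0 where "G0 = {(t *\<^sub>R u, t) | t. True}"
  have G0: "goodG p u G0" unfolding goodG_def
  proof (intro conjI allI impI)
    show "(u, 1) \<in> G0" unfolding G0_def by (auto intro!: exI[of _ 1])
  next
    fix x a y b assume "(x, a) \<in> G0" "(y, b) \<in> G0"
    then obtain t s where "x = t *\<^sub>R u" "a = t" "y = s *\<^sub>R u" "b = s" unfolding G0_def by auto
    then show "(x + y, a + b) \<in> G0" unfolding G0_def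
      by (auto intro!: exI[of _ "t + s"] simp: scaleR_add_left)
  next
    fix x a t assume "(x, a) \<in> G0"
    then obtain s where "x = s *\<^sub>R u" "a = s" unfolding G0_def by auto
    then show "(t *\<^sub>R x, t * a) \<in> G0" unfolding G0_def
      by (auto intro!: exI[of _ "t * s"])
  next
    fix x a b assume "(x, a) \<in> G0" "(x, b) \<in> G0"
    then show "a = b" using u0 unfolding G0_def by auto
  next
    fix x a assume "(x, a) \<in> G0"
    then obtain t where e: "x = t *\<^sub>R u" "a = t" unfolding G0_def by auto
    consider "t = 0" | "t > 0" | "t < 0" by linarith
    then show "a \<le> p x"
    proof cases
      case 1 then show ?thesis using e p0 by simp
    next
      case 2
      have "t * 1 \<le> t * p u" using 2 pu by (intro mult_left_mono) auto
      then show ?thesis using e sublin_hom[OF p 2, of u] by simp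
    next
      case 3
      have "p x = p ((-t) *\<^sub>R (-u))" using e by simp
      also have "\<dots> = (-t) * p (-u)" by (rule sublin_hom[OF p]) (use 3 in simp)
      moreover have "(-t) * (-1) \<le> (-t) * p (-u)" using 3 pmu by (intro mult_left_mono) auto
      ultimately show ?thesis using e by simp
    qed
  qed
  define A where "A = {G. goodG p u G}"
  have "\<exists>M\<in>A. \<forall>X\<in>A. M \<subseteq> X \<longrightarrow> X = M"
  proof (rule Zorn_Lemma2, intro ballI)
    fix C assume C: "C \<in> chains A"
    show "\<exists>U\<in>A. \<forall>X\<in>C. X \<subseteq> U"
    proof (cases "C = {}")
      case True then show ?thesis using G0 A_def by blast
    next
      case False
      have CA: "\<And>X. X \<in> C \<Longrightarrow> goodG p u X" using chainsD2[OF C] A_def by blast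
      have ch: "\<And>X Y. X \<in> C \<Longrightarrow> Y \<in> C \<Longrightarrow> X \<subseteq> Y \<or> Y \<subseteq> X" using chainsD[OF C] by blast
      have "goodG p u (\<Union>C)" unfolding goodG_def
      proof (intro conjI allI impI)
        obtain X where "X \<in> C" using False by blast
        then show "(u, 1) \<in> \<Union> C" using goodG_D(1)[OF CA] by blast
      next
        fix x a y b assume "(x, a) \<in> \<Union> C" "(y, b) \<in> \<Union> C"
        then obtain X Y where XY: "X \<in> C" "Y \<in> C" "(x,a) \<in> X" "(y,b) \<in> Y" by blast
        from ch[OF XY(1,2)] show "(x + y, a + b) \<in> \<Union> C"
        proof
          assume "X \<subseteq> Y" then show ?thesis using goodG_D(2)[OF CA[OF XY(2)]] XY by blast
        next
          assume "Y \<subseteq> X" then show ?thesis using goodG_D(2)[OF CA[OF XY(1)]] XY by blast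
        qed
      next
        fix x a t assume "(x, a) \<in> \<Union> C"
        then obtain X where "X \<in> C" "(x,a) \<in> X" by blast
        then show "(t *\<^sub>R x, t * a) \<in> \<Union> C" using goodG_D(3)[OF CA] by blast
      next
        fix x a b assume "(x, a) \<in> \<Union> C" "(x, b) \<in> \<Union> C"
        then obtain X Y where XY: "X \<in> C" "Y \<in> C" "(x,a) \<in> X" "(x,b) \<in> Y" by blast
        from ch[OF XY(1,2)] show "a = b"
        proof
          assume "X \<subseteq> Y" then show ?thesis using goodG_D(4)[OF CA[OF XY(2)]] XY by blast
        next
          assume "Y \<subseteq> X" then show ?thesis using goodG_D(4)[OF CA[OF XY(1)]] XY by blast
        qed
      next
        fix x a assume "(x, a) \<in> \<Union> C"
        then obtain X where "X \<in> C" "(x,a) \<in> X" by blast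
        then show "a \<le> p x" using goodG_D(5)[OF CA] by blast
      qed
      then show ?thesis unfolding A_def by blast
    qed
  qed
  then obtain M where M: "goodG p u M" and maxM: "\<And>X. goodG p u X \<Longrightarrow> M \<subseteq> X \<Longrightarrow> X = M"
    unfolding A_def by blast
  have tot: "\<exists>b. (w, b) \<in> M" for w
    using goodG_extend[OF p M, of w] maxM by blast
  define F where "F w = (THE b. (w, b) \<in> M)" for w
  have fn: "\<And>x a b. (x,a) \<in> M \<Longrightarrow> (x,b) \<in> M \<Longrightarrow> a = b" using goodG_D(4)[OF M] by blast
  have FM: "(w, F w) \<in> M" for w
  proof -
    have "\<exists>!b. (w, b) \<in> M" using tot[of w] fn by blast
    then show ?thesis unfolding F_def by (rule theI')
  qed
  have Feq: "(w, b) \<in> M \<Longrightarrow> F w = b" for w b using FM fn by blast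
  have "lin F" unfolding lin_def
  proof (intro conjI allI)
    fix a b show "F (a + b) = F a + F b"
      by (rule Feq, rule goodG_D(2)[OF M FM FM])
  next
    fix c a show "F (c *\<^sub>R a) = c * F a"
      by (rule Feq, rule goodG_D(3)[OF M FM])
  qed
  moreover have "F u = 1" using Feq goodG_D(1)[OF M] .
  moreover have "F a \<le> p a" for a using goodG_D(5)[OF M FM] .
  ultimately show ?thesis by blast
qed

theorem separation:
  fixes C :: "'v::real_vector set" and q :: "'v \<Rightarrow> real"
  assumes C: "convex C" and C0: "0 \<in> C" and uC: "u \<notin> C"
    and qnn: "\<And>a. q a \<ge> 0" and qhom: "\<And>t a. t > 0 \<Longrightarrow> q (t *\<^sub>R a) = t * q a"
    and qin: "\<And>a. q a < 1 \<Longrightarrow> a \<in> C"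
  shows "\<exists>F. lin F \<and> F u = 1 \<and> (\<forall>c\<in>C. F c \<le> 1) \<and> (\<forall>a. F a \<le> q a)"
proof -
  define T where "T a = {t. t > 0 \<and> inverse t *\<^sub>R a \<in> C}" for a
  define p where "p a = Inf (T a)" for a
  have cvx: "s *\<^sub>R x + (1 - s) *\<^sub>R y \<in> C" if "x \<in> C" "y \<in> C" "0 \<le> s" "s \<le> 1" for x y s
    by (rule convexD[OF C]) (use that in auto)
  have T1: "t \<in> T a" if "t > q a" for t a
  proof -
    have t: "t > 0" using qnn[of a] that by linarith
    have "q (inverse t *\<^sub>R a) = inverse t * q a" using qhom[of "inverse t" a] t by simp
    also have "\<dots> < 1" using t that by (simp add: field_simps)
    finally show ?thesis using qin t unfolding T_def by blast
  qed
  have Tne: "T a \<noteq> {}" for a using T1[where t="q a + 1" and a=a] by auto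
  have Tbdd: "bdd_below (T a)" for a unfolding T_def bdd_below_def by (auto intro!: exI[of _ 0])
  have Tpos: "t \<in> T a \<Longrightarrow> t > 0" for t a unfolding T_def by simp
  have Tmono: "t \<in> T a" if "s \<in> T a" "t \<ge> s" for s t a
  proof -
    have s: "s > 0" "inverse s *\<^sub>R a \<in> C" using that(1) unfolding T_def by auto
    have t: "t > 0" using s that(2) by linarith
    have "(s / t) *\<^sub>R (inverse s *\<^sub>R a) + (1 - s / t) *\<^sub>R 0 \<in> C"
      by (rule cvx[OF s(2) C0]) (use s t that(2) in auto)
    moreover have "(s / t) *\<^sub>R (inverse s *\<^sub>R a) + (1 - s / t) *\<^sub>R 0 = inverse t *\<^sub>R a"
      using s by (simp add: field_simps)
    ultimately have "inverse t *\<^sub>R a \<in> C" by metis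
    then show ?thesis using t unfolding T_def by simp
  qed
  have pnn: "p a \<ge> 0" for a unfolding p_def
    by (rule cInf_greatest[OF Tne]) (auto dest: Tpos intro: less_imp_le)
  have ple: "p a \<le> t" if "t \<in> T a" for t a unfolding p_def by (rule cInf_lower[OF that Tbdd])
  have pclose: "\<exists>t\<in>T a. t < p a + e" if "e > 0" for a e
    using cInf_lessD[OF Tne[of a], of "p a + e"] that unfolding p_def by simp
  have pq: "p a \<le> q a" for a
  proof (rule field_le_epsilon)
    fix e :: real assume "e > 0"
    then show "p a \<le> q a + e" using ple[OF T1[where t="q a + e" and a=a]] by simp
  qed
  have psub: "sublin p" unfolding sublin_def
  proof (intro conjI allI impI)
    fix a b
    show "p (a + b) \<le> p a + p b"
    proof (rule field_le_epsilon)
      fix e :: real assume e: "e > 0"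
      obtain s where s: "s \<in> T a" "s < p a + e/2" using pclose[where e="e/2" and a=a] e by auto
      obtain t where t: "t \<in> T b" "t < p b + e/2" using pclose[where e="e/2" and a=b] e by auto
      have sp: "s > 0" "inverse s *\<^sub>R a \<in> C" using s(1) unfolding T_def by auto
      have tp: "t > 0" "inverse t *\<^sub>R b \<in> C" using t(1) unfolding T_def by auto
      have "(s / (s + t)) *\<^sub>R (inverse s *\<^sub>R a) + (1 - s / (s + t)) *\<^sub>R (inverse t *\<^sub>R b) \<in> C"
        by (rule cvx[OF sp(2) tp(2)]) (use sp tp in auto)
      moreover have "(s / (s + t)) *\<^sub>R (inverse s *\<^sub>R a) + (1 - s / (s + t)) *\<^sub>R (inverse t *\<^sub>R b)
          = inverse (s + t) *\<^sub>R (a + b)"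
        using sp tp by (simp add: field_simps scaleR_add_right)
      ultimately have "inverse (s + t) *\<^sub>R (a + b) \<in> C" by metis
      then have "s + t \<in> T (a + b)" using sp tp unfolding T_def by simp
      then show "p (a + b) \<le> p a + p b + e" using ple s t by fastforce
    qed
  next
    fix t :: real and a assume t: "t > 0"
    show "p (t *\<^sub>R a) \<le> t * p a"
    proof (rule field_le_epsilon)
      fix e :: real assume e: "e > 0"
      obtain s where s: "s \<in> T a" "s < p a + e / t" using pclose[where e="e/t" and a=a] e t by auto
      have sp: "s > 0" "inverse s *\<^sub>R a \<in> C" using s(1) unfolding T_def by auto
      have "inverse (t * s) *\<^sub>R (t *\<^sub>R a) = inverse s *\<^sub>R a" using t sp by simp
      then have "inverse (t * s) *\<^sub>R (t *\<^sub>R a) \<in> C" using sp(2) by metis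
      then have "t * s \<in> T (t *\<^sub>R a)" using sp t unfolding T_def by simp
      then have "p (t *\<^sub>R a) \<le> t * s" by (rule ple)
      also have "\<dots> \<le> t * (p a + e / t)" using s(2) t by simp
      also have "\<dots> = t * p a + e" using t by (simp add: field_simps)
      finally show "p (t *\<^sub>R a) \<le> t * p a + e" .
    qed
  qed
  have pu: "p u \<ge> 1"
  proof (rule ccontr)
    assume "\<not> 1 \<le> p u"
    then obtain s where s: "s \<in> T u" "s < 1" using pclose[where e="1 - p u" and a=u] by auto
    have "1 \<in> T u" by (rule Tmono[OF s(1)]) (use s in simp)
    then show False using uC unfolding T_def by simp
  qed
  have pmu: "p (- u) \<ge> -1" using pnn[where a="-u"] by simp
  obtain F where F: "lin F" "F u = 1" "\<And>a. F a \<le> p a" using hahn_banach[OF psub pu pmu] by blast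
  have "F c \<le> 1" if "c \<in> C" for c
  proof -
    have "1 \<in> T c" using that unfolding T_def by simp
    then show ?thesis using F(3)[of c] ple by fastforce
  qed
  moreover have "F a \<le> q a" for a using F(3)[of a] pq[of a] by simp
  ultimately show ?thesis using F by blast
qed

lemma dual_comb:
  fixes F :: "('a::real_normed_vector \<Rightarrow>\<^sub>L real) \<Rightarrow> real"
  assumes "lin F" "\<forall>v. (\<forall>x\<in>set xs. blinfun_apply v x = 0) \<longrightarrow> F v = 0"
  shows "\<exists>z. \<forall>v. F v = blinfun_apply v z"
  using assms
proof (induction xs arbitrary: F)
  case Nil
  then show ?case by (auto intro!: exI[of _ 0])
next
  case (Cons x xs)
  have Fadd: "F (a + b) = F a + F b" and Fsc: "F (c *\<^sub>R a) = c * F a" for a b c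
    using Cons.prems(1) unfolding lin_def by auto
  have Fdiff: "F (a - b) = F a - F b" for a b
    using Fadd[of a "- b"] Fsc[of "-1" b] by simp
  show ?case
  proof (cases "\<forall>v::'a \<Rightarrow>\<^sub>L real. (\<forall>x'\<in>set xs. blinfun_apply v x' = 0) \<longrightarrow> blinfun_apply v x = 0")
    case True
    have "\<forall>v. (\<forall>x'\<in>set xs. blinfun_apply v x' = 0) \<longrightarrow> F v = 0"
    proof (intro allI impI)
      fix v :: "'a \<Rightarrow>\<^sub>L real" assume "\<forall>x'\<in>set xs. blinfun_apply v x' = 0"
      moreover have "blinfun_apply v x = 0" using True calculation by blast
      ultimately have "\<forall>x'\<in>set (x # xs). blinfun_apply v x' = 0" by simp
      with Cons.prems(2) show "F v = 0" by blast
    qed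
    then show ?thesis using Cons.IH Cons.prems(1) by blast
  next
    case False
    then obtain v0 :: "'a \<Rightarrow>\<^sub>L real" where v0: "\<forall>x'\<in>set xs. blinfun_apply v0 x' = 0" "blinfun_apply v0 x \<noteq> 0" by blast
    define y0 where "y0 = inverse (blinfun_apply v0 x) *\<^sub>R v0"
    have y0: "blinfun_apply y0 x = 1" "\<forall>x'\<in>set xs. blinfun_apply y0 x' = 0"
      using v0 unfolding y0_def by (auto simp: blinfun.scaleR_left)
    define F' where "F' v = F v - F y0 * blinfun_apply v x" for v
    have "lin F'" unfolding lin_def F'_def
      by (auto simp: Fadd Fsc blinfun.add_left blinfun.scaleR_left algebra_simps)
    moreover have "\<forall>v. (\<forall>x'\<in>set xs. blinfun_apply v x' = 0) \<longrightarrow> F' v = 0"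
    proof (intro allI impI)
      fix v :: "'a \<Rightarrow>\<^sub>L real" assume v: "\<forall>x'\<in>set xs. blinfun_apply v x' = 0"
      define w where "w = v + (- blinfun_apply v x) *\<^sub>R y0"
      have "\<forall>x'\<in>set (x # xs). blinfun_apply w x' = 0"
        using v y0 unfolding w_def by (auto simp: blinfun.add_left blinfun.diff_left blinfun.scaleR_left)
      then have "F w = 0" using Cons.prems(2) by blast
      then show "F' v = 0" unfolding w_def F'_def by (simp add: Fdiff Fsc)
    qed
    ultimately obtain z' where z': "\<forall>v. F' v = blinfun_apply v z'" using Cons.IH by blast
    show ?thesis
    proof (intro exI allI)
      fix v :: "'a \<Rightarrow>\<^sub>L real"
      show "F v = blinfun_apply v (z' + F y0 *\<^sub>R x)"
        using z'[rule_format, of v] unfolding F'_def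
        by (simp add: blinfun.add_right blinfun.scaleR_right)
    qed
  qed
qed

lemma lsc_lim:
  fixes f :: "'a::metric_space \<Rightarrow> real"
  assumes lsc: "\<And>c. closed {x. f x \<le> c}" and l: "l \<ge> 0"
    and lim: "X \<longlonglongrightarrow> y" and ev: "\<And>k. k \<ge> N \<Longrightarrow> f (X k) + l * dist (X k) z \<le> c"
  shows "f y + l * dist y z \<le> c"
proof (rule field_le_epsilon)
  fix e :: real assume e: "e > 0"
  have "((\<lambda>k. dist (X k) z) \<longlonglongrightarrow> dist y z)" using lim by (intro tendsto_dist) auto
  then have "\<forall>\<^sub>F k in sequentially. dist (X k) z > dist y z - e / (l + 1)"
    using e l by (intro order_tendstoD(1)) auto
  then obtain N2 where N2: "\<And>k. k \<ge> N2 \<Longrightarrow> dist (X k) z > dist y z - e / (l + 1)"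
    unfolding eventually_sequentially by blast
  define c' where "c' = c - l * dist y z + e"
  have inS: "f (X (k + max N N2)) \<le> c'" for k
  proof -
    have k1: "k + max N N2 \<ge> N" "k + max N N2 \<ge> N2" by auto
    have "l * (dist y z - e / (l + 1)) \<le> l * dist (X (k + max N N2)) z"
      using N2[OF k1(2)] l by (intro mult_left_mono) auto
    moreover have "l * (e / (l + 1)) \<le> e" using l e by (simp add: field_simps)
    ultimately show ?thesis using ev[OF k1(1)] unfolding c'_def by (simp add: algebra_simps)
  qed
  have lim': "(\<lambda>k. X (k + max N N2)) \<longlonglongrightarrow> y" using lim by (rule LIMSEQ_ignore_initial_segment)
  have "y \<in> {x. f x \<le> c'}"
    by (rule closed_sequentially[OF lsc[of c'], of "\<lambda>k. X (k + max N N2)"]) (use inS lim' in auto)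
  then show "f y + l * dist y z \<le> c + e" unfolding c'_def by simp
qed

theorem ekeland:
  fixes f :: "'a::complete_space \<Rightarrow> real"
  assumes lsc: "\<And>c. closed {x. f x \<le> c}" and bdd: "\<And>x. m \<le> f x" and l: "l > 0"
  shows "\<exists>xe. f xe + l * dist xe x0 \<le> f x0 \<and> (\<forall>y. f xe \<le> f y + l * dist y xe)"
proof -
  define S where "S x = {y. f y + l * dist y x \<le> f x}" for x
  have Sself: "x \<in> S x" for x unfolding S_def by simp
  have Strans: "z \<in> S x" if "y \<in> S x" "z \<in> S y" for x y z
  proof -
    have "dist z x \<le> dist z y + dist y x" by (rule dist_triangle)
    then have "l * dist z x \<le> l * (dist z y + dist y x)" using l
      by (intro mult_left_mono) auto
    then have "l * dist z x \<le> l * dist z y + l * dist y x" by (simp add: distrib_left)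
    then show ?thesis using that unfolding S_def by simp
  qed
  have ne: "f ` S x \<noteq> {}" for x using Sself by blast
  have bb: "bdd_below (f ` S x)" for x using bdd unfolding bdd_below_def by blast
  have exn: "\<exists>y. y \<in> S x \<and> f y < Inf (f ` S x) + (1/2)^n" for x n
  proof -
    have "Inf (f ` S x) < Inf (f ` S x) + (1/2)^n" by simp
    from cInf_lessD[OF ne this] show ?thesis by blast
  qed
  define nxt where "nxt n x = (SOME y. y \<in> S x \<and> f y < Inf (f ` S x) + (1/2)^n)" for n x
  have nxt: "nxt n x \<in> S x" "f (nxt n x) < Inf (f ` S x) + (1/2)^n" for n x
    using someI_ex[OF exn[of x n]] unfolding nxt_def by blast+
  define X where "X = rec_nat x0 (\<lambda>n x. nxt n x)"
  have X0: "X 0 = x0" and XS: "X (Suc n) = nxt n (X n)" for n unfolding X_def by simp_all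
  have nest: "S (X (Suc n)) \<subseteq> S (X n)" for n
  proof -
    have "X (Suc n) \<in> S (X n)" unfolding XS by (rule nxt(1))
    then show ?thesis using Strans by blast
  qed
  have nest2: "S (X (n + k)) \<subseteq> S (X n)" for n k
    by (induction k) (use nest in auto)
  have Xin: "X m \<in> S (X n)" if "m \<ge> n" for m n
    using nest2[of n "m - n"] Sself[of "X m"] that by auto
  have small: "l * dist y (X (Suc n)) \<le> (1/2)^n" if "y \<in> S (X (Suc n))" for y n
  proof -
    have y1: "f y + l * dist y (X (Suc n)) \<le> f (X (Suc n))" using that unfolding S_def by simp
    have "y \<in> S (X n)" using nest that by blast
    then have "Inf (f ` S (X n)) \<le> f y" by (intro cInf_lower[OF _ bb]) auto
    moreover have "f (X (Suc n)) < Inf (f ` S (X n)) + (1/2)^n" using nxt(2) XS by simp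
    ultimately show ?thesis using y1 by linarith
  qed
  have dsmall: "dist y (X (Suc n)) \<le> (1/2)^n / l" if "y \<in> S (X (Suc n))" for y n
  proof -
    have "l * dist y (X (Suc n)) \<le> (1/2)^n" by (rule small[OF that])
    then show ?thesis using l by (simp add: pos_le_divide_eq mult.commute)
  qed
  have "Cauchy X"
  proof (rule metric_CauchyI)
    fix e :: real assume e: "e > 0"
    obtain N where N: "(1/2::real)^N < e * l / 2" using real_arch_pow_inv[of "e * l / 2" "1/2"] e l by auto
    show "\<exists>M. \<forall>m\<ge>M. \<forall>n\<ge>M. dist (X m) (X n) < e"
    proof (intro exI allI impI)
      fix a b assume ab: "a \<ge> Suc N" "b \<ge> Suc N"
      have "dist (X a) (X b) \<le> dist (X a) (X (Suc N)) + dist (X b) (X (Suc N))"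
        by (rule dist_triangle2)
      also have "\<dots> \<le> (1/2)^N / l + (1/2)^N / l"
        using dsmall[OF Xin[OF ab(1)]] dsmall[OF Xin[OF ab(2)]] by simp
      also have "\<dots> < e" using N l by (simp add: field_simps)
      finally show "dist (X a) (X b) < e" .
    qed
  qed
  then obtain xe where lim: "X \<longlonglongrightarrow> xe" using Cauchy_convergent_iff convergent_def by blast
  have xeS: "xe \<in> S (X n)" for n
  proof -
    have "f xe + l * dist xe (X n) \<le> f (X n)"
      by (rule lsc_lim[OF lsc _ lim, where N=n]) (use l Xin in \<open>auto simp: S_def\<close>)
    then show ?thesis unfolding S_def by simp
  qed
  have "f xe + l * dist xe x0 \<le> f x0" using xeS[of 0] X0 unfolding S_def by simp
  moreover have "f xe \<le> f y + l * dist y xe" for y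
  proof (rule ccontr)
    assume "\<not> ?thesis"
    then have yS: "y \<in> S xe" and yne: "y \<noteq> xe" unfolding S_def by auto
    have bnd: "dist y xe \<le> 2 * ((1/2)^n / l)" for n
    proof -
      have "y \<in> S (X (Suc n))" using Strans[OF xeS yS] .
      from dsmall[OF this] dsmall[OF xeS[of "Suc n"]]
      have "dist y (X (Suc n)) + dist xe (X (Suc n)) \<le> 2 * ((1/2)^n / l)" by simp
      moreover have "dist y xe \<le> dist y (X (Suc n)) + dist xe (X (Suc n))" by (rule dist_triangle2)
      ultimately show ?thesis by linarith
    qed
    have d: "dist y xe > 0" using yne by simp
    obtain N where N: "(1/2::real)^N < dist y xe * l / 2"
      using real_arch_pow_inv[of "dist y xe * l / 2" "1/2"] d l by auto
    have "dist y xe \<le> 2 * ((1/2)^N / l)" by (rule bnd)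
    also have "\<dots> < dist y xe" using N l by (simp add: field_simps)
    finally show False by simp
  qed
  ultimately show ?thesis by blast
qed

lemma convex_efun_D:
  assumes "convex_efun g" "g a \<le> ereal t1" "g b \<le> ereal t2" "0 \<le> u" "u \<le> 1"
  shows "g (u *\<^sub>R a + (1 - u) *\<^sub>R b) \<le> ereal (u * t1 + (1 - u) * t2)"
proof -
  have "g (u *\<^sub>R a + (1 - u) *\<^sub>R b) \<le> ereal u * g a + ereal (1 - u) * g b"
    using assms(1,4,5) unfolding convex_efun_def by blast
  also have "\<dots> \<le> ereal u * ereal t1 + ereal (1 - u) * ereal t2"
    using assms(2-5) by (intro add_mono ereal_mult_left_mono) auto
  finally show ?thesis by simp
qed

lemma cvx_strict:
  fixes a b d u v :: real
  assumes "u + v = 1" "u * a \<le> u * d" "v * b \<le> v * d" "u * a < u * d \<or> v * b < v * d"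
  shows "u * a + v * b < d"
proof -
  have "u * d + v * d = (u + v) * d" by (simp add: algebra_simps)
  then have "u * d + v * d = d" using assms(1) by simp
  then show ?thesis using assms(2-4) by linarith
qed

lemma FM:
  fixes g :: "('a::real_normed_vector \<Rightarrow>\<^sub>L real) \<Rightarrow> ereal"
  assumes cvx: "convex_efun g" and lsc: "weak_star_lsc g" and nm: "\<And>y. g y \<noteq> -\<infinity>"
    and minor: "\<And>ys. ereal (blinfun_apply ys x1 + b1) \<le> g ys"
    and dom: "g ys0 < \<infinity>"
    and r: "ereal r < g y"
  shows "\<exists>z b. (\<forall>ys. ereal (blinfun_apply ys z + b) \<le> g ys) \<and> blinfun_apply y z + b > r"
proof -
  obtain c where c: "r < c" "ereal c < g y"
  proof (cases "g y = \<infinity>")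
    case True then show ?thesis using that[of "r + 1"] by simp
  next
    case False
    then obtain gy where gy: "g y = ereal gy" using nm[of y] by (cases "g y") auto
    then show ?thesis using that[of "(r + gy) / 2"] r by simp
  qed
  define s0 where "s0 = (r + c) / 2"
  have s0: "r < s0" "s0 < c" using c(1) unfolding s0_def by auto
  have cl: "closedin weak_star_topology {f. g f \<le> ereal c}" using lsc unfolding weak_star_lsc_def by blast
  have ny: "y \<notin> {f. g f \<le> ereal c}" using c(2) by auto
  obtain xs and \<delta> :: real where \<delta>: "\<delta> > 0"
    and Nout0: "\<forall>y'. (\<forall>x\<in>set xs. \<bar>blinfun_apply y' x - blinfun_apply y x\<bar> < \<delta>) \<longrightarrow> y' \<notin> {f. g f \<le> ereal c}"
    using wstar_closed_nbhd[OF cl ny] by (elim exE conjE)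
  have Nout: "\<not> g y' \<le> ereal c" if "\<forall>x\<in>set xs. \<bar>blinfun_apply y' x - blinfun_apply y x\<bar> < \<delta>" for y'
    using Nout0 that by simp
  define N where "N = {y'. \<forall>x\<in>set xs. \<bar>blinfun_apply y' x - blinfun_apply y x\<bar> < \<delta>}"
  define E where "E = {(ys, t). g ys \<le> ereal t}"
  define W where "W = {(y', s). y' \<in> N \<and> s < c}"
  define t0 where "t0 = real_of_ereal (g ys0)"
  have gys0: "g ys0 = ereal t0" using dom nm[of ys0] unfolding t0_def by (cases "g ys0") auto
  have e0: "(ys0, t0) \<in> E" unfolding E_def using gys0 by simp
  define k0 where "k0 = (y, c - 1) - (ys0, t0)"
  define C where "C = {w - e - k0 | w e. w \<in> W \<and> e \<in> E}"
  define q where "q p = \<bar>snd p\<bar> + sum_list (map (\<lambda>x. \<bar>blinfun_apply (fst p) x\<bar>) xs) / \<delta>"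
    for p :: "('a \<Rightarrow>\<^sub>L real) \<times> real"
  have convN: "convex N" unfolding N_def convex_def
  proof (intro ballI allI impI, safe)
    fix a b :: "'a \<Rightarrow>\<^sub>L real" and u v :: real and x
    assume a: "\<forall>x\<in>set xs. \<bar>blinfun_apply a x - blinfun_apply y x\<bar> < \<delta>"
      and b: "\<forall>x\<in>set xs. \<bar>blinfun_apply b x - blinfun_apply y x\<bar> < \<delta>"
      and uv: "0 \<le> u" "0 \<le> v" "u + v = 1" and x: "x \<in> set xs"
    have "blinfun_apply (u *\<^sub>R a + v *\<^sub>R b) x - blinfun_apply y x
        = u * (blinfun_apply a x - blinfun_apply y x) + v * (blinfun_apply b x - blinfun_apply y x)"
    proof -
      have v: "v = 1 - u" using uv(3) by simp
      show ?thesis unfolding v by (simp add: blinfun.add_left blinfun.diff_left blinfun.scaleR_left algebra_simps)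
    qed
    also have "\<bar>\<dots>\<bar> \<le> u * \<bar>blinfun_apply a x - blinfun_apply y x\<bar> + v * \<bar>blinfun_apply b x - blinfun_apply y x\<bar>"
      using uv by (simp add: abs_triangle_ineq[THEN order_trans] abs_mult)
    also have "\<dots> < \<delta>"
    proof -
      have "u * \<bar>blinfun_apply a x - blinfun_apply y x\<bar> \<le> u * \<delta>" using a x uv by (intro mult_left_mono) auto
      moreover have "v * \<bar>blinfun_apply b x - blinfun_apply y x\<bar> \<le> v * \<delta>" using b x uv by (intro mult_left_mono) auto
      moreover have "u * \<bar>blinfun_apply a x - blinfun_apply y x\<bar> < u * \<delta> \<or> v * \<bar>blinfun_apply b x - blinfun_apply y x\<bar> < v * \<delta>"
        using a b x uv by (cases "u > 0") (auto intro: mult_strict_left_mono)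
      ultimately show ?thesis using uv(3) cvx_strict by blast
    qed
    finally show "\<bar>blinfun_apply (u *\<^sub>R a + v *\<^sub>R b) x - blinfun_apply y x\<bar> < \<delta>" .
  qed
  have convW: "convex W"
  proof -
    have "W = N \<times> {..<c}" unfolding W_def by auto
    then show ?thesis using convex_Times[OF convN convex_real_interval(4)] by simp
  qed
  have convE: "convex E"
  proof (rule convexI)
    fix p1 p2 and u v :: real
    assume h: "p1 \<in> E" "p2 \<in> E" "0 \<le> u" "0 \<le> v" "u + v = 1"
    obtain a t1 where p1: "p1 = (a, t1)" by force
    obtain b t2 where p2: "p2 = (b, t2)" by force
    have v: "v = 1 - u" using h(5) by simp
    have "g a \<le> ereal t1" "g b \<le> ereal t2" using h(1,2) p1 p2 unfolding E_def by auto
    from convex_efun_D[OF cvx this h(3)] h(4) v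
    have "g (u *\<^sub>R a + v *\<^sub>R b) \<le> ereal (u * t1 + v * t2)" by simp
    then show "u *\<^sub>R p1 + v *\<^sub>R p2 \<in> E" unfolding E_def p1 p2 by simp
  qed
  have convC: "convex C"
  proof (rule convexI)
    fix p1 p2 and u v :: real
    assume h: "p1 \<in> C" "p2 \<in> C" "0 \<le> u" "0 \<le> v" "u + v = 1"
    obtain w1 e1 where 1: "p1 = w1 - e1 - k0" "w1 \<in> W" "e1 \<in> E" using h(1) unfolding C_def by blast
    obtain w2 e2 where 2: "p2 = w2 - e2 - k0" "w2 \<in> W" "e2 \<in> E" using h(2) unfolding C_def by blast
    have "u *\<^sub>R p1 + v *\<^sub>R p2 = (u *\<^sub>R w1 + v *\<^sub>R w2) - (u *\<^sub>R e1 + v *\<^sub>R e2) - (u + v) *\<^sub>R k0"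
      unfolding 1 2 by (simp add: algebra_simps)
    then have eq: "u *\<^sub>R p1 + v *\<^sub>R p2 = (u *\<^sub>R w1 + v *\<^sub>R w2) - (u *\<^sub>R e1 + v *\<^sub>R e2) - k0"
      using h(5) by simp
    have "u *\<^sub>R w1 + v *\<^sub>R w2 \<in> W" by (rule convexD[OF convW 1(2) 2(2) h(3-5)])
    moreover have "u *\<^sub>R e1 + v *\<^sub>R e2 \<in> E" by (rule convexD[OF convE 1(3) 2(3) h(3-5)])
    ultimately show "u *\<^sub>R p1 + v *\<^sub>R p2 \<in> C" unfolding C_def eq by blast
  qed
  have yN: "y \<in> N" unfolding N_def using \<delta> by simp
  have w0: "(y, c - 1) \<in> W" unfolding W_def using yN by simp
  have C0: "0 \<in> C" unfolding C_def k0_def using w0 e0 by force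
  have WE: "w \<notin> E" if "w \<in> W" for w
  proof
    assume "w \<in> E"
    moreover obtain y' s where ws: "w = (y', s)" by force
    ultimately have "y' \<in> N" "s < c" "g y' \<le> ereal s" using that unfolding W_def E_def by auto
    moreover then have "\<not> g y' \<le> ereal c" using Nout unfolding N_def by blast
    ultimately show False by (meson ereal_less_eq(3) less_imp_le order_trans)
  qed
  have uC: "- k0 \<notin> C"
  proof
    assume "- k0 \<in> C"
    then obtain w e where "- k0 = w - e - k0" "w \<in> W" "e \<in> E" unfolding C_def by blast
    then have "w = e" by (simp add: algebra_simps)
    with WE \<open>w \<in> W\<close> \<open>e \<in> E\<close> show False by blast
  qed
  have slnn: "sum_list (map (\<lambda>x. \<bar>blinfun_apply v x\<bar>) xs) \<ge> 0" for v :: "'a \<Rightarrow>\<^sub>L real"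
    by (induction xs) auto
  have qnn: "q p \<ge> 0" for p unfolding q_def using \<delta> slnn[of "fst p"]
    by (intro add_nonneg_nonneg divide_nonneg_pos) auto
  have qhom: "q (t *\<^sub>R p) = t * q p" if "t > 0" for t p
  proof -
    have sl: "sum_list (map (\<lambda>x. \<bar>blinfun_apply (t *\<^sub>R fst p) x\<bar>) xs)
        = t * sum_list (map (\<lambda>x. \<bar>blinfun_apply (fst p) x\<bar>) xs)"
      using that by (induction xs) (simp_all add: blinfun.scaleR_left abs_mult algebra_simps)
    have "q (t *\<^sub>R p) = \<bar>t * snd p\<bar> + sum_list (map (\<lambda>x. \<bar>blinfun_apply (t *\<^sub>R fst p) x\<bar>) xs) / \<delta>"
      unfolding q_def by simp
    also have "\<dots> = t * q p" unfolding sl q_def using that by (simp add: abs_mult algebra_simps)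
    finally show ?thesis .
  qed
  have qin: "p \<in> C" if "q p < 1" for p
  proof -
    obtain v s where p: "p = (v, s)" by force
    have sl: "\<bar>blinfun_apply v x\<bar> \<le> sum_list (map (\<lambda>x. \<bar>blinfun_apply v x\<bar>) xs)" if "x \<in> set xs" for x
      by (rule member_le_sum_list) (use that in auto)
    have qq: "\<bar>s\<bar> + sum_list (map (\<lambda>x. \<bar>blinfun_apply v x\<bar>) xs) / \<delta> < 1"
      using that unfolding q_def p by simp
    have dn: "sum_list (map (\<lambda>x. \<bar>blinfun_apply v x\<bar>) xs) / \<delta> \<ge> 0"
      using \<delta> slnn[of v] by (simp add: divide_nonneg_pos)
    have s1: "\<bar>s\<bar> < 1" using qq dn by linarith
    have sm: "sum_list (map (\<lambda>x. \<bar>blinfun_apply v x\<bar>) xs) / \<delta> < 1" using qq by linarith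
    have "sum_list (map (\<lambda>x. \<bar>blinfun_apply v x\<bar>) xs) < \<delta>" using sm \<delta> by (simp add: field_simps)
    then have "y + v \<in> N" unfolding N_def using sl by (force simp: blinfun.add_left)
    then have "(y + v, c - 1 + s) \<in> W" unfolding W_def using s1 by auto
    moreover have "p = (y + v, c - 1 + s) - (ys0, t0) - k0" unfolding k0_def p by simp
    ultimately show ?thesis unfolding C_def using e0 by blast
  qed
  obtain F where F: "lin F" "F (- k0) = 1" "\<And>p. p \<in> C \<Longrightarrow> F p \<le> 1" "\<And>p. F p \<le> q p"
    using separation[OF convC C0 uC qnn qhom qin] by blast
  have Flin: "(\<forall>a b. F (a + b) = F a + F b) \<and> (\<forall>c a. F (c *\<^sub>R a) = c * F a)"
    using F(1) unfolding lin_def .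
  have Fadd: "F (a + b) = F a + F b" and Fsc: "F (t *\<^sub>R a) = t * F a" for a b t
    using Flin by blast+
  have Fminus: "F (- a) = - F a" for a using Fsc[of "-1" a] by simp
  have Fdiff: "F (a - b) = F a - F b" for a b using Fadd[of a "- b"] Fminus[of b] by simp
  have sep: "F w \<le> F e" if "w \<in> W" "e \<in> E" for w e
  proof -
    have "F (w - e - k0) \<le> 1" using F(3) that unfolding C_def by blast
    then show ?thesis using F(2) Fminus[of k0] by (simp add: Fdiff)
  qed
  define F1 where "F1 v = F (v, 0)" for v
  define \<alpha> where "\<alpha> = F (0, 1)"
  have Fsplit: "F (v, s) = F1 v + s * \<alpha>" for v s
  proof -
    have "(v, s) = (v, 0) + s *\<^sub>R (0, 1)" by simp
    then show ?thesis unfolding F1_def \<alpha>_def by (metis Fadd Fsc)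
  qed
  have "lin F1" unfolding lin_def F1_def
  proof (intro conjI allI)
    fix a b :: "'a \<Rightarrow>\<^sub>L real" show "F (a + b, 0) = F (a, 0) + F (b, 0)"
      using Fadd[of "(a, 0)" "(b, 0)"] by simp
  next
    fix t :: real and a :: "'a \<Rightarrow>\<^sub>L real" show "F (t *\<^sub>R a, 0) = t * F (a, 0)"
      using Fsc[of t "(a, 0)"] by simp
  qed
  moreover have "\<forall>v. (\<forall>x\<in>set xs. blinfun_apply v x = 0) \<longrightarrow> F1 v = 0"
  proof (intro allI impI)
    fix v :: "'a \<Rightarrow>\<^sub>L real" assume v: "\<forall>x\<in>set xs. blinfun_apply v x = 0"
    have "sum_list (map (\<lambda>x. \<bar>blinfun_apply v x\<bar>) xs) = 0" using v by (induction xs) auto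
    then have q0: "q (v, 0) = 0" unfolding q_def by simp
    have "sum_list (map (\<lambda>x. \<bar>blinfun_apply (- v) x\<bar>) xs) = 0" using v
      by (induction xs) (auto simp: blinfun.minus_left)
    then have q1: "q (- v, 0) = 0" unfolding q_def by simp
    have "F1 v \<le> 0" using F(4)[of "(v,0)"] q0 unfolding F1_def by simp
    moreover have "F1 (- v) \<le> 0" using F(4)[of "(-v,0)"] q1 unfolding F1_def by simp
    moreover have "F1 (- v) = - F1 v" unfolding F1_def using Fminus[of "(v, 0)"] by simp
    ultimately show "F1 v = 0" by linarith
  qed
  ultimately obtain z1 where z1: "\<And>v. F1 v = blinfun_apply v z1" using dual_comb by blast
  have sepG: "F1 w + s * \<alpha> \<le> F1 ys + t * \<alpha>" if "w \<in> N" "s < c" "g ys \<le> ereal t" for w s ys t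
    using sep[of "(w, s)" "(ys, t)"] that unfolding W_def E_def by (simp add: Fsplit)
  have Fu: "F1 (ys0 - y) + (t0 - c + 1) * \<alpha> = 1"
    using F(2) unfolding k0_def by (simp add: Fsplit algebra_simps)
  have \<alpha>nn: "\<alpha> \<ge> 0"
  proof (rule ccontr)
    assume "\<not> \<alpha> \<ge> 0"
    then have an: "\<alpha> < 0" by simp
    define K where "K = F1 ys0 + t0 * \<alpha> - F1 y - (c - 1) * \<alpha> + 1"
    define n where "n = max 0 (K / (- \<alpha>))"
    have "g ys0 \<le> ereal (t0 + n)" using gys0 unfolding n_def by simp
    from sepG[OF yN _ this, of "c - 1"]
    have "F1 y + (c - 1) * \<alpha> \<le> F1 ys0 + (t0 + n) * \<alpha>" by simp
    moreover have "n * \<alpha> \<le> - K"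
    proof -
      have "K / (- \<alpha>) \<le> n" unfolding n_def by simp
      then have "K \<le> n * (- \<alpha>)" using an by (simp add: field_simps)
      then show ?thesis by simp
    qed
    ultimately show False unfolding K_def by (simp add: algebra_simps)
  qed
  have gD: "g ys = ereal (real_of_ereal (g ys))" if "g ys \<noteq> \<infinity>" for ys
    using that nm[of ys] by (cases "g ys") auto
  show ?thesis
  proof (cases "\<alpha> > 0")
    case True
    define z where "z = (- inverse \<alpha>) *\<^sub>R z1"
    define b where "b = s0 + blinfun_apply y z1 / \<alpha>"
    have yz: "blinfun_apply w z = - blinfun_apply w z1 / \<alpha>" for w
      unfolding z_def by (simp add: blinfun.scaleR_right blinfun.minus_right divide_inverse mult.commute)
    have "ereal (blinfun_apply ys z + b) \<le> g ys" for ys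
    proof (cases "g ys = \<infinity>")
      case True then show ?thesis by simp
    next
      case False
      let ?G = "real_of_ereal (g ys)"
      have "F1 y + s0 * \<alpha> \<le> F1 ys + ?G * \<alpha>"
        by (rule sepG[OF yN s0(2)]) (use gD[OF False] in simp)
      then have "blinfun_apply y z1 + s0 * \<alpha> \<le> blinfun_apply ys z1 + ?G * \<alpha>" using z1 by simp
      then have "(blinfun_apply y z1 - blinfun_apply ys z1) / \<alpha> + s0 \<le> ?G" using True
        by (simp add: field_simps)
      moreover have "blinfun_apply ys z + b = s0 + (blinfun_apply y z1 - blinfun_apply ys z1) / \<alpha>"
        unfolding b_def yz by (simp add: diff_divide_distrib)
      ultimately have "blinfun_apply ys z + b \<le> ?G" by simp
      then show ?thesis using gD[OF False] by (metis ereal_less_eq(3))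
    qed
    moreover have "blinfun_apply y z + b > r" unfolding b_def yz using s0 by simp
    ultimately show ?thesis by blast
  next
    case False
    then have a0: "\<alpha> = 0" using \<alpha>nn by simp
    define d where "d = ys0 - y"
    have Fd: "F1 d = 1" using Fu a0 unfolding d_def by simp
    define S where "S = sum_list (map (\<lambda>x. \<bar>blinfun_apply d x\<bar>) xs)"
    have Snn: "S \<ge> 0" unfolding S_def by (rule slnn)
    define \<tau> where "\<tau> = \<delta> / (1 + S)"
    have \<tau>: "\<tau> > 0" unfolding \<tau>_def using \<delta> Snn by simp
    have "y + \<tau> *\<^sub>R d \<in> N" unfolding N_def
    proof (intro CollectI ballI)
      fix x assume x: "x \<in> set xs"
      have "\<bar>blinfun_apply d x\<bar> \<le> S" unfolding S_def by (rule member_le_sum_list) (use x in auto)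
      then have "\<tau> * \<bar>blinfun_apply d x\<bar> \<le> \<tau> * S" using \<tau> by (intro mult_left_mono) auto
      also have "\<tau> * S < \<delta>" unfolding \<tau>_def using \<delta> Snn by (simp add: field_simps)
      finally show "\<bar>blinfun_apply (y + \<tau> *\<^sub>R d) x - blinfun_apply y x\<bar> < \<delta>"
        using \<tau> by (simp add: blinfun.add_left blinfun.scaleR_left abs_mult)
    qed
    then have sepD: "blinfun_apply y z1 + \<tau> \<le> blinfun_apply ys z1" if "g ys \<noteq> \<infinity>" for ys
    proof -
      have "F1 (y + \<tau> *\<^sub>R d) + s0 * \<alpha> \<le> F1 ys + real_of_ereal (g ys) * \<alpha>"
        by (rule sepG[OF \<open>y + \<tau> *\<^sub>R d \<in> N\<close> s0(2)]) (use gD[OF that] in simp)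
      moreover have "F1 (y + \<tau> *\<^sub>R d) = F1 y + \<tau>" using Fd \<open>lin F1\<close> unfolding lin_def by simp
      ultimately show ?thesis using a0 z1 by simp
    qed
    define M where "M = max 0 ((r - blinfun_apply y x1 - b1 + 1) / \<tau>)"
    have M1: "(r - blinfun_apply y x1 - b1 + 1) / \<tau> \<le> M" "M \<ge> 0" unfolding M_def by auto
    have M: "M \<ge> 0" "(r - blinfun_apply y x1 - b1 + 1) \<le> M * \<tau>"
      using M1 \<tau> by (auto simp: pos_divide_le_eq)
    define z where "z = x1 - M *\<^sub>R z1"
    define b where "b = b1 + M * (blinfun_apply y z1 + \<tau>)"
    have "ereal (blinfun_apply ys z + b) \<le> g ys" for ys
    proof (cases "g ys = \<infinity>")
      case True then show ?thesis by simp
    next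
      case False
      have "M * (blinfun_apply y z1 + \<tau>) \<le> M * blinfun_apply ys z1"
        using sepD[OF False] M by (intro mult_left_mono) auto
      then have "blinfun_apply ys z + b \<le> blinfun_apply ys x1 + b1"
        unfolding z_def b_def by (simp add: blinfun.diff_right blinfun.scaleR_right)
      then show ?thesis using minor[of ys] by (meson ereal_less_eq(3) order_trans)
    qed
    moreover have "blinfun_apply y z + b > r"
      unfolding z_def b_def using M by (simp add: blinfun.diff_right blinfun.scaleR_right algebra_simps)
    ultimately show ?thesis by blast
  qed
qed

theorem mainTheorem2:
  fixes g :: "('a::banach \<Rightarrow>\<^sub>L real) \<Rightarrow> ereal"
    and \<epsilon> \<beta> :: real and x0s :: "'a \<Rightarrow>\<^sub>L real" and x0 :: 'a
  assumes "proper_fun g" and "convex_efun g" and "weak_star_lsc g"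
    and "\<epsilon> > 0" and "\<beta> \<ge> 0"
    and "x0s \<in> edom g" and "x0 \<in> eps_subdiff_X g \<epsilon> x0s"
  shows "\<exists>xes \<in> edom g. \<exists>xe :: 'a.
      xe \<in> eps_subdiff_X g 0 xes
    \<and> norm (xes - x0s) \<le> sqrt \<epsilon> * (1 + \<beta> * norm x0s)
    \<and> \<bar>real_of_ereal (g xes) - real_of_ereal (g x0s)\<bar>
        \<le> sqrt \<epsilon> * (norm x0 + \<beta> * \<bar>blinfun_apply x0s x0\<bar>) + 2 * \<epsilon>
    \<and> norm (xe - x0) \<le> sqrt \<epsilon>
    \<and> (\<forall>xs :: 'a \<Rightarrow>\<^sub>L real. \<bar>blinfun_apply xs xe - blinfun_apply xs x0\<bar> \<le> sqrt \<epsilon> * norm xs)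
    \<and> x0 \<in> eps_subdiff_X g (2 * \<epsilon>) xes
    \<and> \<bar>blinfun_apply (xes - x0s) (xe - x0)\<bar> \<le> \<epsilon>"
proof -
  have nm: "\<And>y. g y \<noteq> -\<infinity>" using assms(1) unfolding proper_fun_def by auto
  have epos: "\<epsilon> > 0" by (rule assms(4))
  define se where "se = sqrt \<epsilon>"
  have se: "se > 0" "se * se = \<epsilon>" unfolding se_def using epos by auto
  define D where "D = edom g"
  define G where "G y = real_of_ereal (g y)" for y
  have gD: "g y = ereal (G y)" if "y \<in> D" for y
    using that nm[of y] unfolding D_def edom_def G_def by (cases "g y") auto
  have gnD: "g y = \<infinity>" if "y \<notin> D" for y
    using that unfolding D_def edom_def by auto
  have x0sD: "x0s \<in> D" using assms(6) unfolding D_def .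
  define G0 where "G0 = G x0s"
  have gx0s: "g x0s = ereal G0" using gD[OF x0sD] unfolding G0_def .
  have sub0: "ereal (blinfun_apply (ys - x0s) x0) \<le> g ys - g x0s + ereal \<epsilon>" for ys
    using assms(7) unfolding eps_subdiff_X_def by blast
  have A0: "blinfun_apply ys x0 - G ys - blinfun_apply x0s x0 \<le> - G0 + \<epsilon>" if "ys \<in> D" for ys
  proof -
    have "ereal (blinfun_apply (ys - x0s) x0) \<le> ereal (G ys - G0 + \<epsilon>)"
      using sub0[of ys] gD[OF that] gx0s by simp
    then show ?thesis by (simp add: blinfun.diff_left)
  qed
  have minor: "ereal (blinfun_apply ys x0 + (G0 - blinfun_apply x0s x0 - \<epsilon>)) \<le> g ys" for ys
  proof (cases "ys \<in> D")
    case True then show ?thesis using A0[OF True] gD[OF True] by simp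
  next
    case False then show ?thesis using gnD by simp
  qed
  define Mc where "Mc = - G0 + \<epsilon> + 1"
  define hh where "hh ys x = blinfun_apply ys x - G ys - blinfun_apply x0s x" for ys x
  define \<phi> where "\<phi> x = Sup ((\<lambda>ys. min Mc (hh ys x)) ` D)" for x
  have Dne: "(\<lambda>ys. min Mc (hh ys x)) ` D \<noteq> {}" for x using x0sD by blast
  have Dbdd: "bdd_above ((\<lambda>ys. min Mc (hh ys x)) ` D)" for x
    unfolding bdd_above_def by (auto intro!: exI[of _ Mc])
  have \<phi>le: "\<phi> x \<le> c \<longleftrightarrow> (\<forall>ys\<in>D. min Mc (hh ys x) \<le> c)" for x c
    unfolding \<phi>_def using cSup_le_iff[OF Dne Dbdd] by simp
  have \<phi>ge: "min Mc (hh ys x) \<le> \<phi> x" if "ys \<in> D" for ys x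
    unfolding \<phi>_def by (rule cSup_upper[OF _ Dbdd]) (use that in blast)
  have lsc: "closed {x. \<phi> x \<le> c}" for c
  proof -
    have "{x. \<phi> x \<le> c} = (\<Inter>ys\<in>D. {x. min Mc (hh ys x) \<le> c})" using \<phi>le by auto
    moreover have "closed {x. min Mc (hh ys x) \<le> c}" for ys
      unfolding hh_def
      by (intro closed_Collect_le continuous_on_min continuous_on_diff continuous_on_const
          linear_continuous_on[OF blinfun.bounded_linear_right])
    ultimately show ?thesis by auto
  qed
  have \<phi>lo: "- G0 \<le> \<phi> x" for x
  proof -
    have "min Mc (hh x0s x) = - G0" unfolding hh_def Mc_def G0_def using epos by simp
    then show ?thesis using \<phi>ge[OF x0sD, of x] by simp
  qed
  have \<phi>x0: "\<phi> x0 \<le> - G0 + \<epsilon>"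
    unfolding \<phi>le using A0 unfolding hh_def by (auto simp: min_le_iff_disj)
  obtain xe where E1: "\<phi> xe + se * dist xe x0 \<le> \<phi> x0" and E2: "\<And>y. \<phi> xe \<le> \<phi> y + se * dist y xe"
    using ekeland[OF lsc \<phi>lo se(1), of x0] by blast
  define v where "v = \<phi> xe"
  have vlo: "- G0 \<le> v" unfolding v_def by (rule \<phi>lo)
  have vhi: "v \<le> - G0 + \<epsilon>" using E1 \<phi>x0 se(1) unfolding v_def
    by (smt (verit) mult_nonneg_nonneg zero_le_dist)
  have hv: "hh ys xe \<le> v" if "ys \<in> D" for ys
  proof -
    have "min Mc (hh ys xe) \<le> v" using \<phi>ge[OF that] unfolding v_def .
    moreover have "v < Mc" using vhi unfolding Mc_def by simp
    ultimately show ?thesis by (simp add: min_le_iff_disj)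
  qed
  have dxe: "norm (xe - x0) \<le> se"
  proof -
    have "se * dist xe x0 \<le> se * se" using E1 \<phi>x0 vlo se(2) unfolding v_def by linarith
    then have "dist xe x0 \<le> se" using se(1) by simp
    then show ?thesis by (simp add: dist_norm)
  qed
  define A where "A = {p :: 'a \<times> real. \<forall>ys\<in>D. hh ys (fst p + xe) \<le> snd p + v}"
  define B where "B = {p :: 'a \<times> real. snd p < - se * norm (fst p)}"
  define k1 where "k1 = ((0::'a), (1::real))"
  define C where "C = {a - b - k1 | a b. a \<in> A \<and> b \<in> B}"
  define q where "q p = 2 * \<bar>snd p\<bar> + 2 * se * norm (fst p)" for p :: "'a \<times> real"
  have hhlin: "hh ys (u *\<^sub>R a + w *\<^sub>R b + xe) = u * hh ys (a + xe) + w * hh ys (b + xe)"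
    if "u + w = 1" for ys u w a b
  proof -
    have w: "w = 1 - u" using that by simp
    show ?thesis unfolding hh_def w
      by (simp add: blinfun.add_right blinfun.diff_right blinfun.scaleR_right algebra_simps)
  qed
  have disj: "p \<notin> B" if "p \<in> A" for p
  proof
    assume pB: "p \<in> B"
    have "\<phi> (fst p + xe) \<le> snd p + v" unfolding \<phi>le using that unfolding A_def
      by (auto simp: min_le_iff_disj)
    moreover have "v \<le> \<phi> (fst p + xe) + se * dist (fst p + xe) xe" using E2 unfolding v_def .
    moreover have "dist (fst p + xe) xe = norm (fst p)" by (simp add: dist_norm)
    ultimately show False using pB unfolding B_def by simp
  qed
  have convA: "convex A"
  proof (rule convexI)
    fix p1 p2 and u w :: real
    assume h: "p1 \<in> A" "p2 \<in> A" "0 \<le> u" "0 \<le> w" "u + w = 1"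
    show "u *\<^sub>R p1 + w *\<^sub>R p2 \<in> A" unfolding A_def
    proof (intro CollectI ballI)
      fix ys assume ys: "ys \<in> D"
      have 1: "hh ys (fst p1 + xe) \<le> snd p1 + v" "hh ys (fst p2 + xe) \<le> snd p2 + v"
        using h(1,2) ys unfolding A_def by auto
      have "hh ys (fst (u *\<^sub>R p1 + w *\<^sub>R p2) + xe) = u * hh ys (fst p1 + xe) + w * hh ys (fst p2 + xe)"
        using hhlin[OF h(5)] by simp
      also have "\<dots> \<le> u * (snd p1 + v) + w * (snd p2 + v)"
        using 1 h(3,4) by (intro add_mono mult_left_mono) auto
      also have "\<dots> = snd (u *\<^sub>R p1 + w *\<^sub>R p2) + (u + w) * v" by (simp add: algebra_simps)
      finally show "hh ys (fst (u *\<^sub>R p1 + w *\<^sub>R p2) + xe) \<le> snd (u *\<^sub>R p1 + w *\<^sub>R p2) + v"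
        using h(5) by simp
    qed
  qed
  have convB: "convex B"
  proof (rule convexI)
    fix p1 p2 and u w :: real
    assume h: "p1 \<in> B" "p2 \<in> B" "0 \<le> u" "0 \<le> w" "u + w = 1"
    have 1: "snd p1 < - se * norm (fst p1)" "snd p2 < - se * norm (fst p2)" using h(1,2) unfolding B_def by auto
    have a1: "u * snd p1 \<le> u * (- se * norm (fst p1))"
      by (rule mult_left_mono) (use 1 h in auto)
    have a2: "w * snd p2 \<le> w * (- se * norm (fst p2))"
      by (rule mult_left_mono) (use 1 h in auto)
    note a = a1 a2
    have b: "u * snd p1 < u * (- se * norm (fst p1)) \<or> w * snd p2 < w * (- se * norm (fst p2))"
    proof (cases "u > 0")
      case True
      have "u * snd p1 < u * (- se * norm (fst p1))" by (rule mult_strict_left_mono) (use 1 True in auto)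
      then show ?thesis by blast
    next
      case False
      then have "w = 1" using h(3,5) by simp
      then show ?thesis using 1 by simp
    qed
    have "norm (u *\<^sub>R fst p1 + w *\<^sub>R fst p2) \<le> u * norm (fst p1) + w * norm (fst p2)"
      using norm_triangle_ineq[of "u *\<^sub>R fst p1" "w *\<^sub>R fst p2"] h(3,4) by simp
    then have c: "se * norm (u *\<^sub>R fst p1 + w *\<^sub>R fst p2) \<le> se * (u * norm (fst p1) + w * norm (fst p2))"
      using se(1) by (intro mult_left_mono) auto
    have "u * snd p1 + w * snd p2 < - se * norm (u *\<^sub>R fst p1 + w *\<^sub>R fst p2)"
      using a b c by (simp add: algebra_simps) linarith?
    then show "u *\<^sub>R p1 + w *\<^sub>R p2 \<in> B" unfolding B_def by simp
  qed
  have convC: "convex C"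
  proof (rule convexI)
    fix p1 p2 and u w :: real
    assume h: "p1 \<in> C" "p2 \<in> C" "0 \<le> u" "0 \<le> w" "u + w = 1"
    obtain a1 b1 where 1: "p1 = a1 - b1 - k1" "a1 \<in> A" "b1 \<in> B" using h(1) unfolding C_def by blast
    obtain a2 b2 where 2: "p2 = a2 - b2 - k1" "a2 \<in> A" "b2 \<in> B" using h(2) unfolding C_def by blast
    have "u *\<^sub>R p1 + w *\<^sub>R p2 = (u *\<^sub>R a1 + w *\<^sub>R a2) - (u *\<^sub>R b1 + w *\<^sub>R b2) - (u + w) *\<^sub>R k1"
      unfolding 1 2 by (simp add: algebra_simps)
    then have eq: "u *\<^sub>R p1 + w *\<^sub>R p2 = (u *\<^sub>R a1 + w *\<^sub>R a2) - (u *\<^sub>R b1 + w *\<^sub>R b2) - k1"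
      using h(5) by simp
    have "u *\<^sub>R a1 + w *\<^sub>R a2 \<in> A" by (rule convexD[OF convA 1(2) 2(2) h(3-5)])
    moreover have "u *\<^sub>R b1 + w *\<^sub>R b2 \<in> B" by (rule convexD[OF convB 1(3) 2(3) h(3-5)])
    ultimately show "u *\<^sub>R p1 + w *\<^sub>R p2 \<in> C" unfolding C_def eq by blast
  qed
  have a0: "(0, 0) \<in> A" unfolding A_def using hv by simp
  have bB: "(y, t) \<in> B \<longleftrightarrow> t < - se * norm y" for y t unfolding B_def by simp
  have C0: "0 \<in> C"
  proof -
    have "(0::'a \<times> real) = (0, 0) - (0, -1) - k1" unfolding k1_def by simp
    moreover have "((0::'a), (-1::real)) \<in> B" unfolding bB by simp
    ultimately show ?thesis unfolding C_def using a0 by blast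
  qed
  have uC: "- k1 \<notin> C"
  proof
    assume "- k1 \<in> C"
    then obtain a b where "- k1 = a - b - k1" "a \<in> A" "b \<in> B" unfolding C_def by blast
    then have "a = b" by (simp add: algebra_simps)
    with disj \<open>a \<in> A\<close> \<open>b \<in> B\<close> show False by blast
  qed
  have qnn: "q p \<ge> 0" for p unfolding q_def using se(1) by simp
  have qhom: "q (t *\<^sub>R p) = t * q p" if "t > 0" for t p
    unfolding q_def using that by (simp add: abs_mult algebra_simps)
  have qin: "p \<in> C" if "q p < 1" for p
  proof -
    have qq: "2 * \<bar>snd p\<bar> + 2 * se * norm (fst p) < 1" using that unfolding q_def by simp
    have nn: "se * norm (fst p) \<ge> 0" using se(1) by simp
    have 1: "\<bar>snd p\<bar> < 1/2" "se * norm (fst p) < 1/2" using qq nn by linarith+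
    have "(- fst p, - snd p - 1) \<in> B" unfolding bB using 1 by simp
    moreover have "p = (0, 0) - (- fst p, - snd p - 1) - k1" unfolding k1_def by (simp add: prod_eq_iff)
    ultimately show ?thesis unfolding C_def using a0 by blast
  qed
  obtain F where F: "lin F" "F (- k1) = 1" "\<And>p. p \<in> C \<Longrightarrow> F p \<le> 1" "\<And>p. F p \<le> q p"
    using separation[OF convC C0 uC qnn qhom qin] by blast
  have Flin: "(\<forall>a b. F (a + b) = F a + F b) \<and> (\<forall>c a. F (c *\<^sub>R a) = c * F a)"
    using F(1) unfolding lin_def .
  have Fadd: "F (a + b) = F a + F b" and Fsc: "F (t *\<^sub>R a) = t * F a" for a b t
    using Flin by blast+
  have Fminus: "F (- a) = - F a" for a using Fsc[of "-1" a] by simp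
  have Fdiff: "F (a - b) = F a - F b" for a b using Fadd[of a "- b"] Fminus[of b] by simp
  have sep: "F a \<le> F b" if "a \<in> A" "b \<in> B" for a b
  proof -
    have "F (a - b - k1) \<le> 1" using F(3) that unfolding C_def by blast
    then show ?thesis using F(2) Fminus[of k1] by (simp add: Fdiff)
  qed
  define lf where "lf x = F (x, 0)" for x
  have Fsplit: "F (x, t) = lf x - t" for x t
  proof -
    have "(x, t) = (x, 0) + (- t) *\<^sub>R (- k1)" unfolding k1_def by simp
    then have "F (x, t) = F ((x, 0) + (- t) *\<^sub>R (- k1))" by simp
    also have "\<dots> = F (x, 0) + (- t) * F (- k1)" by (simp only: Fadd Fsc)
    finally have "F (x, t) = F (x, 0) + (- t) * F (- k1)" .
    then show ?thesis using F(2) unfolding lf_def by simp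
  qed
  have ladd: "lf (a + b) = lf a + lf b" for a b unfolding lf_def using Fadd[of "(a, 0)" "(b, 0)"] by simp
  have lsc': "lf (t *\<^sub>R a) = t * lf a" for a t unfolding lf_def using Fsc[of t "(a, 0)"] by simp
  have lminus: "lf (- a) = - lf a" for a using lsc'[of "-1" a] by simp
  have lup: "lf x \<le> 2 * se * norm x" for x using F(4)[of "(x, 0)"] unfolding q_def lf_def by simp
  have lbl: "bounded_linear lf"
  proof (rule bounded_linear_intro[where K="2 * se"])
    fix x show "norm (lf x) \<le> norm x * (2 * se)"
      using lup[of x] lup[of "- x"] lminus[of x] by (simp add: abs_le_iff algebra_simps)
  qed (simp_all add: ladd lsc')
  define L where "L = Blinfun lf"
  have Lap: "blinfun_apply L = lf" unfolding L_def by (rule bounded_linear_Blinfun_apply[OF lbl])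
  have lneg: "- lf y \<le> se * norm y" for y
  proof (rule field_le_epsilon)
    fix e :: real assume e: "e > 0"
    have "(y, - se * norm y - e) \<in> B" unfolding bB using e by simp
    from sep[OF a0 this] have "F (0, 0) \<le> F (y, - se * norm y - e)" .
    then show "- lf y \<le> se * norm y + e" unfolding Fsplit using lsc'[of 0 0] by simp
  qed
  have labs: "\<bar>lf y\<bar> \<le> se * norm y" for y
    using lneg[of y] lneg[of "- y"] lminus[of y] by simp
  have Lnorm: "norm L \<le> se"
    by (rule norm_blinfun_bound) (use se(1) labs Lap in auto)
  have subg: "lf (fst p) \<le> snd p" if "p \<in> A" for p
  proof (rule field_le_epsilon)
    fix e :: real assume e: "e > 0"
    have "(0, - e) \<in> B" unfolding bB using e by simp
    from sep[OF that this] have "F p \<le> F (0, - e)" .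
    moreover have "F p = lf (fst p) - snd p" using Fsplit[of "fst p" "snd p"] by simp
    ultimately show "lf (fst p) \<le> snd p + e" unfolding Fsplit using lsc'[of 0 0] by simp
  qed
  define xes where "xes = x0s + L"
  have xesap: "blinfun_apply xes w = blinfun_apply x0s w + lf w" for w
    unfolding xes_def by (simp add: blinfun.add_left Lap)
  define r where "r = lf xe - v"
  have gle: "g xes \<le> ereal r"
  proof (rule ccontr)
    assume "\<not> g xes \<le> ereal r"
    then have "ereal r < g xes" by simp
    from FM[OF assms(2) assms(3) nm minor, of x0s, OF _ this] assms(6)
    obtain z b where zb: "\<And>ys. ereal (blinfun_apply ys z + b) \<le> g ys" "blinfun_apply xes z + b > r"
      unfolding edom_def by blast
    have "(z - xe, - b - blinfun_apply x0s z - v) \<in> A" unfolding A_def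
    proof (intro CollectI ballI)
      fix ys assume ys: "ys \<in> D"
      have "ereal (blinfun_apply ys z + b) \<le> ereal (G ys)" using zb(1)[of ys] gD[OF ys] by simp
      then show "hh ys (fst (z - xe, - b - blinfun_apply x0s z - v) + xe)
          \<le> snd (z - xe, - b - blinfun_apply x0s z - v) + v"
        unfolding hh_def by simp
    qed
    from subg[OF this] have "lf (z - xe) \<le> - b - blinfun_apply x0s z - v" by simp
    moreover have "lf (z - xe) = lf z - lf xe" using ladd[of z "- xe"] lminus[of xe] by simp
    ultimately have "blinfun_apply xes z + b \<le> r" unfolding xesap r_def by simp
    with zb(2) show False by simp
  qed
  have "g xes < \<infinity>" by (rule order_le_less_trans[OF gle]) simp
  then have xesD: "xes \<in> D" unfolding D_def edom_def by simp
  have Gxes: "G xes = r"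
  proof -
    have "G xes \<le> r" using gle gD[OF xesD] by simp
    moreover have "hh xes xe \<le> v" by (rule hv[OF xesD])
    then have "r \<le> G xes" unfolding hh_def xesap r_def by simp
    ultimately show ?thesis by simp
  qed
  have gxes: "g xes = ereal r" using gD[OF xesD] Gxes by simp
  have lxe: "\<bar>lf (xe - x0)\<bar> \<le> \<epsilon>"
  proof -
    have "\<bar>lf (xe - x0)\<bar> \<le> se * norm (xe - x0)" by (rule labs)
    also have "\<dots> \<le> se * se" using dxe se(1) by (intro mult_left_mono) auto
    finally show ?thesis using se(2) by simp
  qed
  have ldiff: "lf (xe - x0) = lf xe - lf x0" using ladd[of xe "- x0"] lminus[of x0] by simp
  show ?thesis
  proof (rule bexI[of _ xes], rule exI[of _ xe], intro conjI allI)
    show "xe \<in> eps_subdiff_X g 0 xes" unfolding eps_subdiff_X_def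
    proof (intro CollectI allI)
      fix ys
      show "ereal (blinfun_apply (ys - xes) xe) \<le> g ys - g xes + ereal 0"
      proof (cases "ys \<in> D")
        case True
        have "hh ys xe \<le> v" by (rule hv[OF True])
        then have "blinfun_apply (ys - xes) xe \<le> G ys - r"
          unfolding hh_def r_def by (simp add: blinfun.diff_left xesap)
        then show ?thesis using gD[OF True] gxes by simp
      next
        case False then show ?thesis using gnD[OF False] gxes by simp
      qed
    qed
  next
    have "norm (xes - x0s) = norm L" unfolding xes_def by simp
    also have "\<dots> \<le> se" by (rule Lnorm)
    also have "\<dots> \<le> se * (1 + \<beta> * norm x0s)" using se(1) assms(5)
      by (simp add: mult_nonneg_nonneg)
    finally show "norm (xes - x0s) \<le> sqrt \<epsilon> * (1 + \<beta> * norm x0s)" unfolding se_def .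
  next
    have up: "r - G0 \<le> se * norm x0 + \<epsilon>"
      using vlo lxe ldiff labs[of x0] unfolding r_def by (simp add: abs_le_iff)
    have "hh xes x0 \<le> - G0 + \<epsilon>" using A0[OF xesD] unfolding hh_def .
    then have lo: "G0 - r \<le> se * norm x0 + \<epsilon>"
      using labs[of x0] unfolding hh_def Gxes xesap by (simp add: abs_le_iff)
    have "\<bar>r - G0\<bar> \<le> se * norm x0 + \<epsilon>" using up lo by simp
    also have "\<dots> \<le> se * (norm x0 + \<beta> * \<bar>blinfun_apply x0s x0\<bar>) + 2 * \<epsilon>"
      using se(1) assms(5) epos by (simp add: algebra_simps mult_nonneg_nonneg)
    finally show "\<bar>real_of_ereal (g xes) - real_of_ereal (g x0s)\<bar>
        \<le> sqrt \<epsilon> * (norm x0 + \<beta> * \<bar>blinfun_apply x0s x0\<bar>) + 2 * \<epsilon>"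
      unfolding se_def using gxes gx0s by simp
  next
    show "norm (xe - x0) \<le> sqrt \<epsilon>" using dxe unfolding se_def .
  next
    fix xs :: "'a \<Rightarrow>\<^sub>L real"
    have "\<bar>blinfun_apply xs xe - blinfun_apply xs x0\<bar> = norm (blinfun_apply xs (xe - x0))"
      by (simp add: blinfun.diff_right)
    also have "\<dots> \<le> norm xs * norm (xe - x0)" by (rule norm_blinfun)
    also have "\<dots> \<le> norm xs * se" using dxe by (intro mult_left_mono) auto
    finally show "\<bar>blinfun_apply xs xe - blinfun_apply xs x0\<bar> \<le> sqrt \<epsilon> * norm xs"
      unfolding se_def by (simp add: mult.commute)
  next
    show "x0 \<in> eps_subdiff_X g (2 * \<epsilon>) xes" unfolding eps_subdiff_X_def
    proof (intro CollectI allI)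
      fix ys
      show "ereal (blinfun_apply (ys - xes) x0) \<le> g ys - g xes + ereal (2 * \<epsilon>)"
      proof (cases "ys \<in> D")
        case True
        have "blinfun_apply (ys - xes) x0 \<le> G ys - r + 2 * \<epsilon>"
          using A0[OF True] vlo lxe ldiff unfolding r_def
          by (simp add: blinfun.diff_left xesap abs_le_iff)
        then show ?thesis using gD[OF True] gxes by simp
      next
        case False then show ?thesis using gnD[OF False] gxes by simp
      qed
    qed
  next
    have "blinfun_apply (xes - x0s) (xe - x0) = lf (xe - x0)"
      unfolding xes_def by (simp add: Lap)
    then show "\<bar>blinfun_apply (xes - x0s) (xe - x0)\<bar> \<le> \<epsilon>" using lxe by simp
  qed (use xesD in \<open>simp add: D_def\<close>)
qed

end
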